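(* Let $Q$ be the four-point space with points $p,m,u,c$ whose open sets are exactly the subsets $S$ such that ($m\in S\Rightarrow p,u\in S$) and ($c\in S\Rightarrow u\in S$) (thus $m\in\overline{\{p\}}$, $m\in\overline{\{u\}}$, $c\in\overline{\{u\}}$). Let $T$ be the Sierpiński space with points $s,c$ and open sets $\emptyset,\{s\},\{s,c\}$, and let $q:Q\to T$ send $p,m,u\mapsto s$ and $c\mapsto c$. A non-empty topological space $X$ is regular (every point $x$ and closed set $F$ with $x\notin F$ have disjoint open neighbourhoods) iff for every point $x\in X$, the map $\{x\}\to X$ satisfies $(\{x\}\to X)\rightthreetimes q$.
   Context: For morphisms $f:A\to B$ and $g:X\to Y$ in a category, write $f\rightthreetimes g$ ("$f$ has the left lifting property with respect to $g$") if for all morphisms $i:A\to X$, $j:B\to Y$ with $g\circ i=j\circ f$ there exists a morphism $h:B\to X$ with $h\circ f=i$ and $g\circ h=j$. No $T_0$ or $T_1$ assumption is included in "regular". *)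

theory Defs
  imports "HOL-Analysis.Analysis"
begin

datatype qpt = Qp | Qm | Qu | Qc

definition Qopen :: "qpt set \<Rightarrow> bool" where
  "Qopen S \<longleftrightarrow> (Qm \<in> S \<longrightarrow> Qp \<in> S \<and> Qu \<in> S) \<and> (Qc \<in> S \<longrightarrow> Qu \<in> S)"

lemma istopology_Qopen: "istopology Qopen"
  unfolding istopology_def Qopen_def by blast

definition Qtop :: "qpt topology" where
  "Qtop = topology Qopen"

lemma openin_Qtop: "openin Qtop S \<longleftrightarrow> Qopen S"
  by (simp add: Qtop_def topology_inverse' istopology_Qopen)

datatype tpt = Ts | Tc

definition Topen :: "tpt set \<Rightarrow> bool" where
  "Topen S \<longleftrightarrow> S = {} \<or> S = {Ts} \<or> S = {Ts, Tc}"

lemma istopology_Topen: "istopology Topen"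
  unfolding istopology_def Topen_def
  apply (intro conjI allI impI)
   apply auto[1]
  apply (simp add: subset_insert_iff)
  by (smt (verit) Union_empty Union_insert Union_subsetI Un_absorb cSup_singleton
      insert_absorb insert_commute insert_not_empty subset_insert_iff subset_singletonD tpt.exhaust
      empty_subsetI Sup_empty UNIV_I Union_upper equalityI subsetI)

definition Ttop :: "tpt topology" where
  "Ttop = topology Topen"

definition q :: "qpt \<Rightarrow> tpt" where
  "q x = (if x = Qc then Tc else Ts)"

definition llp :: "'a topology \<Rightarrow> 'b topology \<Rightarrow> ('a \<Rightarrow> 'b) \<Rightarrow>
                   'c topology \<Rightarrow> 'd topology \<Rightarrow> ('c \<Rightarrow> 'd) \<Rightarrow> bool" where
  "llp A B f X Y g \<longleftrightarrow>
     (\<forall>i j. continuous_map A X i \<and> continuous_map B Y j \<and>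
            (\<forall>a\<in>topspace A. g (i a) = j (f a)) \<longrightarrow>
        (\<exists>h. continuous_map B X h \<and>
             (\<forall>a\<in>topspace A. h (f a) = i a) \<and>
             (\<forall>b\<in>topspace B. g (h b) = j b)))"

end

theory Submission
  imports Defs
begin

lemma topspace_Qtop: "topspace Qtop = UNIV"
  using openin_subset[of Qtop UNIV] by (auto simp: openin_Qtop Qopen_def)

lemma openin_Ttop: "openin Ttop S \<longleftrightarrow> Topen S"
  by (simp add: Ttop_def topology_inverse' istopology_Topen)

lemma tpt_neq_Ts: "(t \<noteq> Ts) = (t = Tc)" by (cases t) auto
lemma tpt_neq_Tc: "(t \<noteq> Tc) = (t = Ts)" by (cases t) auto

lemma UNIV_tpt: "(UNIV::tpt set) = {Ts, Tc}"
  by (auto simp: tpt_neq_Ts tpt_neq_Tc)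


lemma topspace_Ttop: "topspace Ttop = UNIV"
proof -
  have "openin Ttop {Ts, Tc}" by (simp add: openin_Ttop Topen_def)
  hence "{Ts, Tc} \<subseteq> topspace Ttop" by (rule openin_subset)
  thus ?thesis using UNIV_tpt by auto
qed

lemma cont_Q:
  assumes a1: "openin X {y\<in>topspace X. h y = Qp}"
    and a2: "openin X {y\<in>topspace X. h y = Qu}"
    and a3: "openin X {y\<in>topspace X. h y = Qu \<or> h y = Qc}"
    and a4: "openin X {y\<in>topspace X. h y \<noteq> Qc}"
  shows "continuous_map X Qtop h"
  unfolding continuous_map_def
proof (intro conjI allI impI)
  show "h \<in> topspace X \<rightarrow> topspace Qtop" by (simp add: topspace_Qtop)
  fix S assume "openin Qtop S"
  hence S: "Qopen S" by (simp add: openin_Qtop)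
  have eq: "{y\<in>topspace X. h y \<in> S} =
     (if Qp\<in>S then {y\<in>topspace X. h y = Qp} else {}) \<union>
     (if Qu\<in>S then {y\<in>topspace X. h y = Qu} else {}) \<union>
     (if Qc\<in>S then {y\<in>topspace X. h y = Qu \<or> h y = Qc} else {}) \<union>
     (if Qm\<in>S then {y\<in>topspace X. h y \<noteq> Qc} else {})"
  proof (rule set_eqI)
    fix y show "y \<in> {y\<in>topspace X. h y \<in> S} \<longleftrightarrow> y \<in> (if Qp\<in>S then {y\<in>topspace X. h y = Qp} else {}) \<union>
     (if Qu\<in>S then {y\<in>topspace X. h y = Qu} else {}) \<union>
     (if Qc\<in>S then {y\<in>topspace X. h y = Qu \<or> h y = Qc} else {}) \<union>
     (if Qm\<in>S then {y\<in>topspace X. h y \<noteq> Qc} else {})"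
      using S unfolding Qopen_def by (cases "h y") auto
  qed
  show "openin X {y\<in>topspace X. h y \<in> S}"
    unfolding eq using a1 a2 a3 a4
    by (intro openin_Un) auto
qed

lemma cont_T:
  assumes a: "openin X {y\<in>topspace X. j y = Ts}"
  shows "continuous_map X Ttop j"
  unfolding continuous_map_def
proof (intro conjI allI impI)
  show "j \<in> topspace X \<rightarrow> topspace Ttop" by (simp add: topspace_Ttop)
  fix S assume "openin Ttop S"
  hence "S = {} \<or> S = {Ts} \<or> S = {Ts, Tc}" by (simp add: openin_Ttop Topen_def)
  moreover have "{y\<in>topspace X. j y \<in> {Ts, Tc}} = topspace X"
    by (auto simp: tpt_neq_Ts tpt_neq_Tc)
  ultimately show "openin X {y\<in>topspace X. j y \<in> S}"
    using a by auto
qed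

theorem claim1:
  fixes X :: "'a topology"
  assumes "topspace X \<noteq> {}"
  shows "regular_space X \<longleftrightarrow>
         (\<forall>x\<in>topspace X. llp (subtopology X {x}) X id Qtop Ttop q)"
proof
  assume reg: "regular_space X"
  show "\<forall>x\<in>topspace X. llp (subtopology X {x}) X id Qtop Ttop q"
  proof (intro ballI)
    fix x assume x: "x \<in> topspace X"
    have tsub: "topspace (subtopology X {x}) = {x}" using x by auto
    show "llp (subtopology X {x}) X id Qtop Ttop q"
      unfolding llp_def
    proof (intro allI impI)
      fix i :: "'a \<Rightarrow> qpt" and j
      assume A: "continuous_map (subtopology X {x}) Qtop i \<and> continuous_map X Ttop j \<and>
             (\<forall>a\<in>topspace (subtopology X {x}). q (i a) = j (id a))"
      hence jx: "q (i x) = j x" and cj: "continuous_map X Ttop j" using tsub by auto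
      have "openin Ttop {Ts}" by (simp add: openin_Ttop Topen_def)
      hence Uo: "openin X {y\<in>topspace X. j y \<in> {Ts}}"
        using cj unfolding continuous_map_def by blast
      hence Uo': "openin X {y\<in>topspace X. j y = Ts}" by simp
      have Fc: "closedin X {y\<in>topspace X. j y = Tc}"
      proof -
        have "{y\<in>topspace X. j y = Tc} = topspace X - {y\<in>topspace X. j y = Ts}"
          by (auto simp: tpt_neq_Ts tpt_neq_Tc)
        thus ?thesis using Uo' by auto
      qed
      show "\<exists>h. continuous_map X Qtop h \<and>
             (\<forall>a\<in>topspace (subtopology X {x}). h (id a) = i a) \<and>
             (\<forall>b\<in>topspace X. q (h b) = j b)"
      proof (cases "i x = Qu \<or> i x = Qc")
        case True
        define h where "h y = (if j y = Ts then Qu else Qc)" for y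
        have "continuous_map X Qtop h"
        proof (rule cont_Q)
          show "openin X {y\<in>topspace X. h y = Qp}" by (simp add: h_def)
          have "{y\<in>topspace X. h y = Qu} = {y\<in>topspace X. j y = Ts}" by (auto simp: h_def tpt_neq_Ts tpt_neq_Tc)
          thus "openin X {y\<in>topspace X. h y = Qu}" using Uo' by simp
          show "openin X {y\<in>topspace X. h y = Qu \<or> h y = Qc}" by (simp add: h_def)
          have "{y\<in>topspace X. h y \<noteq> Qc} = {y\<in>topspace X. j y = Ts}" by (auto simp: h_def tpt_neq_Ts tpt_neq_Tc)
          thus "openin X {y\<in>topspace X. h y \<noteq> Qc}" using Uo' by simp
        qed
        moreover have "h x = i x" using True jx by (auto simp: h_def q_def)
        moreover have "\<forall>b\<in>topspace X. q (h b) = j b"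
          by (auto simp: h_def q_def) (simp_all add: tpt_neq_Ts tpt_neq_Tc)
        ultimately show ?thesis using tsub by auto
      next
        case False
        hence ix: "i x = Qp \<or> i x = Qm" by (cases "i x") auto
        hence jxs: "j x = Ts" using jx by (auto simp: q_def)
        obtain P W where P: "openin X P" and W: "openin X W" and xP: "x \<in> P"
          and FW: "{y\<in>topspace X. j y = Tc} \<subseteq> W" and dj: "disjnt P W"
        proof -
          have "x \<in> topspace X - {y\<in>topspace X. j y = Tc}" using x jxs by simp
          then have "\<exists>U V. openin X U \<and> openin X V \<and> x \<in> U \<and> {y\<in>topspace X. j y = Tc} \<subseteq> V \<and> disjnt U V"
            using reg Fc unfolding regular_space_def by blast
          then show ?thesis using that by blast
        qed
        have PX: "P \<subseteq> topspace X" and WX: "W \<subseteq> topspace X"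
          using P W openin_subset by auto
        show ?thesis
        proof (cases "i x = Qp")
          case True
          define h where "h y = (if j y = Tc then Qc else if y \<in> W then Qu
                                 else if y \<in> P then Qp else Qm)" for y
          have "continuous_map X Qtop h"
          proof (rule cont_Q)
            have "{y\<in>topspace X. h y = Qp} = P"
              using PX FW dj by (auto simp: h_def disjnt_iff)
            thus "openin X {y\<in>topspace X. h y = Qp}" using P by simp
            have "{y\<in>topspace X. h y = Qu} = {y\<in>topspace X. j y = Ts} \<inter> W"
              by (auto simp: h_def tpt_neq_Ts tpt_neq_Tc)
            thus "openin X {y\<in>topspace X. h y = Qu}" using Uo' W by auto
            have "{y\<in>topspace X. h y = Qu \<or> h y = Qc} = W"
              using WX FW by (auto simp: h_def tpt_neq_Ts tpt_neq_Tc)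
            thus "openin X {y\<in>topspace X. h y = Qu \<or> h y = Qc}" using W by simp
            have "{y\<in>topspace X. h y \<noteq> Qc} = {y\<in>topspace X. j y = Ts}"
              by (auto simp: h_def) (simp_all add: tpt_neq_Ts tpt_neq_Tc)
            thus "openin X {y\<in>topspace X. h y \<noteq> Qc}" using Uo' by simp
          qed
          moreover have "h x = i x" using True jxs xP dj by (auto simp: h_def disjnt_iff)
          moreover have "\<forall>b\<in>topspace X. q (h b) = j b"
            by (auto simp: h_def q_def) (simp_all add: tpt_neq_Ts tpt_neq_Tc)
          ultimately show ?thesis using tsub by auto
        next
          case False
          hence ixm: "i x = Qm" using ix by simp
          define h where "h y = (if j y = Tc then Qc else if y \<in> W then Qu
                                 else Qm)" for y
          have "continuous_map X Qtop h"
          proof (rule cont_Q)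
            show "openin X {y\<in>topspace X. h y = Qp}" by (simp add: h_def)
            have "{y\<in>topspace X. h y = Qu} = {y\<in>topspace X. j y = Ts} \<inter> W"
              by (auto simp: h_def tpt_neq_Ts tpt_neq_Tc)
            thus "openin X {y\<in>topspace X. h y = Qu}" using Uo' W by auto
            have "{y\<in>topspace X. h y = Qu \<or> h y = Qc} = W"
              using WX FW by (auto simp: h_def tpt_neq_Ts tpt_neq_Tc)
            thus "openin X {y\<in>topspace X. h y = Qu \<or> h y = Qc}" using W by simp
            have "{y\<in>topspace X. h y \<noteq> Qc} = {y\<in>topspace X. j y = Ts}"
              by (auto simp: h_def) (simp_all add: tpt_neq_Ts tpt_neq_Tc)
            thus "openin X {y\<in>topspace X. h y \<noteq> Qc}" using Uo' by simp
          qed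
          moreover have "h x = i x" using ixm jxs xP dj by (auto simp: h_def disjnt_iff)
          moreover have "\<forall>b\<in>topspace X. q (h b) = j b"
            by (auto simp: h_def q_def) (simp_all add: tpt_neq_Ts tpt_neq_Tc)
          ultimately show ?thesis using tsub by auto
        qed
      qed
    qed
  qed
next
  assume L: "\<forall>x\<in>topspace X. llp (subtopology X {x}) X id Qtop Ttop q"
  show "regular_space X"
    unfolding regular_space_def
  proof (intro allI impI)
    fix C a assume Ca: "closedin X C \<and> a \<in> topspace X - C"
    hence a: "a \<in> topspace X" and aC: "a \<notin> C" and C: "closedin X C" by auto
    have tsub: "topspace (subtopology X {a}) = {a}" using a by auto
    define j where "j y = (if y \<in> C then Tc else Ts)" for y
    have cj: "continuous_map X Ttop j"
    proof (rule cont_T)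
      have "{y\<in>topspace X. j y = Ts} = topspace X - C" by (auto simp: j_def)
      thus "openin X {y\<in>topspace X. j y = Ts}" using C by auto
    qed
    have ci: "continuous_map (subtopology X {a}) Qtop (\<lambda>_. Qp)"
      by (simp add: topspace_Qtop)
    have pre: "\<forall>a'\<in>topspace (subtopology X {a}). q ((\<lambda>_. Qp) a') = j (id a')"
      using tsub aC by (simp add: j_def q_def)
    have ll: "llp (subtopology X {a}) X id Qtop Ttop q" using L a by blast
    obtain h where ch: "continuous_map X Qtop h"
      and hj: "\<forall>b\<in>topspace X. q (h b) = j b" and ha0: "\<forall>a'\<in>topspace (subtopology X {a}). h (id a') = Qp"
      using ll[unfolded llp_def, rule_format, OF conjI[OF ci conjI[OF cj pre]]] by blast
    have ha: "h a = Qp" using ha0 tsub by simp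
    have "openin Qtop {Qp}" by (simp add: openin_Qtop Qopen_def)
    hence o1: "openin X {y\<in>topspace X. h y \<in> {Qp}}"
      using ch unfolding continuous_map_def by blast
    have "openin Qtop {Qu, Qc}" by (simp add: openin_Qtop Qopen_def)
    hence o2: "openin X {y\<in>topspace X. h y \<in> {Qu, Qc}}"
      using ch unfolding continuous_map_def by blast
    have "C \<subseteq> {y\<in>topspace X. h y \<in> {Qu, Qc}}"
    proof
      fix y assume y: "y \<in> C"
      hence yX: "y \<in> topspace X" using C closedin_subset by auto
      hence "q (h y) = Tc" using hj y by (auto simp: j_def)
      hence "h y = Qc" by (auto simp: q_def split: if_splits)
      thus "y \<in> {y\<in>topspace X. h y \<in> {Qu, Qc}}" using yX by simp
    qed
    moreover have "a \<in> {y\<in>topspace X. h y \<in> {Qp}}" using a ha by simp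
    moreover have "disjnt {y\<in>topspace X. h y \<in> {Qp}} {y\<in>topspace X. h y \<in> {Qu, Qc}}"
      by (auto simp: disjnt_iff)
    ultimately show "\<exists>U V. openin X U \<and> openin X V \<and> a \<in> U \<and> C \<subseteq> V \<and> disjnt U V"
      using o1 o2 by blast
  qed
qed

end
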